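(* Fix positive integers $m,D,L$ and $M>0$. Let $\mathcal G_M$ be the class of functions $(s,a,s')\mapsto f(s,\theta(a))-\gamma\max_{a'\in A}f(s',\theta(a'))$ on $S\times A\times S$, over all families $\Theta=\{\theta(a)\}_{a\in A}$ in which each $f(\cdot,\theta(a))$ is a residual network of size $(d,m,D,L)$ and $\|\Theta\|_{\mathcal P}\le M$. Then for samples $\mathcal S$ of size $n$ as in the context, $$\mathrm{Rad}(\mathcal G_M)\le 6|A|^3M\sqrt{\frac{2\ln(2d)}{n}}.$$
   Context: Residual networks: for positive integers $d,m,D,L$, a residual network of size $(d,m,D,L)$ is a function $f(\cdot,\theta):\mathbb R^d\to\mathbb R$, $f(x,\theta)=u^{\top}h^{[L]}$, where $h^{[0]}=Vx$ and $h^{[l]}=h^{[l-1]}+U^{[l]}\sigma(W^{[l]}h^{[l-1]})$ for $l=1,\dots,L$, with $V\in\mathbb R^{D\times d}$, $W^{[l]}\in\mathbb R^{m\times D}$, $U^{[l]}\in\mathbb R^{D\times m}$, $u\in\mathbb R^D$, $\sigma(z)=\max(z,0)$ applied entrywise, and $\theta=(u,V,\{W^{[l]}\}_{l=1}^L,\{U^{[l]}\}_{l=1}^L)$. Its weighted path norm is $\|\theta\|_{\mathcal P}=\big\||u|^{\top}(I+3|U^{[L]}||W^{[L]}|)\cdots(I+3|U^{[1]}||W^{[1]}|)|V|\big\|_1$, where $|\cdot|$ of a matrix/vector is entrywise absolute value and $I$ is the $D\times D$ identity. For a family $\Theta=\{\theta(a)\}_{a\in A}$ of parameters (one network per action, all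 of the same size), $f(s,\theta(a))$ denotes the $a$-th network and $\|\Theta\|_{\mathcal P}=\sum_{a\in A}\|\theta(a)\|_{\mathcal P}$. Setting: $S\subseteq[0,1]^d$ is compact with positive Lebesgue measure; $A$ is a finite action set with $|A|=2^{\alpha}$, $\alpha\ge0$ an integer; $\gamma\in(0,1)$; $\tilde g:S\times A\times[0,\infty)\to S$ is a transition map and $\Delta t\in(0,1)$ is fixed; $\mathcal D$ is the uniform distribution on $S$ and $\mathcal U$ the uniform distribution on $A$. A sample $\mathcal S=\{z_i=(s_i,a_i,s_i')\}_{i=1}^n$ consists of i.i.d. pairs $s_i\sim\mathcal D$, $a_i\sim\mathcal U$ (independent) with $s_i'=\tilde g(s_i,a_i,\Delta t)$. Rademacher complexity: for a class $\mathcal G$ of real functions, $\mathrm{Rad}_{\mathcal S}(\mathcal G)=\frac1n\mathbb E_\tau\big[\sup_{g\in\mathcal G}\sum_{i=1}^n\tau_ig(z_i)\big]$ with $\tau_1,\dots,\tau_n$ i.i.d. uniform on $\{-1,+1\}$, and $\mathrm{Rad}(\mathcal G)=\mathbb E_{\mathcal S}[\mathrm{Rad}_{\mathcal S}(\mathcal G)]$. *)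

theory Defs
  imports "HOL-Probability.Probability"
begin

text \<open>Index conventions (entries outside the ranges below are never used):
  out_w i (i < D) is u; in_w i j (i < D) is V; W_w l k j (1 \<le> l \<le> L, k < m, j < D) is W^[l];
  U_w l i k (1 \<le> l \<le> L, i < D, k < m) is U^[l].\<close>
record 'd resnet_param =
  out_w :: "nat \<Rightarrow> real"
  in_w  :: "nat \<Rightarrow> 'd \<Rightarrow> real"
  W_w   :: "nat \<Rightarrow> nat \<Rightarrow> nat \<Rightarrow> real"
  U_w   :: "nat \<Rightarrow> nat \<Rightarrow> nat \<Rightarrow> real"

definition relu :: "real \<Rightarrow> real" where
  "relu z = max z 0"

fun hid :: "nat \<Rightarrow> nat \<Rightarrow> ('d::finite) resnet_param \<Rightarrow> real^'d \<Rightarrow> nat \<Rightarrow> nat \<Rightarrow> real" where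
  "hid m D th x 0 = (\<lambda>i. \<Sum>j\<in>UNIV. in_w th i j * x $ j)"
| "hid m D th x (Suc l) = (\<lambda>i. hid m D th x l i +
      (\<Sum>k<m. U_w th (Suc l) i k * relu (\<Sum>j<D. W_w th (Suc l) k j * hid m D th x l j)))"

definition resnet :: "nat \<Rightarrow> nat \<Rightarrow> nat \<Rightarrow> real^'d \<Rightarrow> ('d::finite) resnet_param \<Rightarrow> real" where
  "resnet m D L x th = (\<Sum>i<D. out_w th i * hid m D th x L i)"

text \<open>pmat l = (I+3|U^[l]||W^[l]|)...(I+3|U^[1]||W^[1]|)|V|, a D x d matrix.\<close>
fun pmat :: "nat \<Rightarrow> nat \<Rightarrow> ('d::finite) resnet_param \<Rightarrow> nat \<Rightarrow> nat \<Rightarrow> 'd \<Rightarrow> real" where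
  "pmat m D th 0 = (\<lambda>i j. \<bar>in_w th i j\<bar>)"
| "pmat m D th (Suc l) = (\<lambda>i j. pmat m D th l i j +
      3 * (\<Sum>k<m. \<Sum>i'<D. \<bar>U_w th (Suc l) i k\<bar> * \<bar>W_w th (Suc l) k i'\<bar> * pmat m D th l i' j))"

definition path_norm :: "nat \<Rightarrow> nat \<Rightarrow> nat \<Rightarrow> ('d::finite) resnet_param \<Rightarrow> real" where
  "path_norm m D L th = (\<Sum>j\<in>UNIV. \<bar>\<Sum>i<D. \<bar>out_w th i\<bar> * pmat m D th L i j\<bar>)"

definition G_class :: "nat \<Rightarrow> nat \<Rightarrow> nat \<Rightarrow> 'a set \<Rightarrow> real \<Rightarrow> real \<Rightarrow>
    ((real^'d) \<times> 'a \<times> (real^'d) \<Rightarrow> real) set" where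
  "G_class m D L A \<gamma> M =
     {(\<lambda>(s, a, s'). resnet m D L s (\<Theta> a) - \<gamma> * Max ((\<lambda>a'. resnet m D L s' (\<Theta> a')) ` A)) | \<Theta>.
        (\<Sum>a\<in>A. path_norm m D L (\<Theta> a)) \<le> M}"

text \<open>Empirical Rademacher complexity on the sample z 0, ..., z (n-1); the expectation
  over tau uniform on {-1,1}^n is written as an average.\<close>
definition emp_rad :: "('z \<Rightarrow> real) set \<Rightarrow> nat \<Rightarrow> (nat \<Rightarrow> 'z) \<Rightarrow> real" where
  "emp_rad G n z = (1 / real n) *
     ((\<Sum>\<tau>\<in>({..<n} \<rightarrow>\<^sub>E {-1, 1::real}). (SUP g\<in>G. \<Sum>i<n. \<tau> i * g (z i))) / 2 ^ n)"

definition pair_dist :: "(real^'d::finite) set \<Rightarrow> 'a set \<Rightarrow> ((real^'d) \<times> 'a) measure" where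
  "pair_dist S A = uniform_measure lborel S \<Otimes>\<^sub>M uniform_count_measure A"

text \<open>Rad(G) = E_sample [emp_rad], with s_i' = gt s_i a_i dt; the expectation of the
  nonnegative empirical complexity is taken as a nonnegative (ennreal) integral.\<close>
definition rad :: "(((real^'d::finite) \<times> 'a \<times> (real^'d)) \<Rightarrow> real) set \<Rightarrow> nat \<Rightarrow>
    (real^'d) set \<Rightarrow> 'a set \<Rightarrow> ((real^'d) \<Rightarrow> 'a \<Rightarrow> real \<Rightarrow> real^'d) \<Rightarrow> real \<Rightarrow> ennreal" where
  "rad G n S A gt dt =
     (\<integral>\<^sup>+ \<omega>. ennreal (emp_rad G n (\<lambda>i. (fst (\<omega> i), snd (\<omega> i), gt (fst (\<omega> i)) (snd (\<omega> i)) dt)))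
        \<partial>(\<Pi>\<^sub>M i\<in>{..<n}. pair_dist S A))"

end

theory Submission
  imports Defs "HOL-Probability.Hoeffding"
begin


inductive cls :: "((real^'d::finite) \<Rightarrow> real) \<Rightarrow> real \<Rightarrow> bool" where
  coord: "cls (\<lambda>x. c * x $ j) \<bar>c\<bar>"
| rl: "cls \<phi> q \<Longrightarrow> cls (\<lambda>x. c * relu (\<phi> x)) (3 * \<bar>c\<bar> * q)"
| add: "cls f p \<Longrightarrow> cls g q \<Longrightarrow> cls (\<lambda>x. f x + g x) (p + q)"
| zero: "cls (\<lambda>x. 0) 0"
| mono: "cls f p \<Longrightarrow> p \<le> q \<Longrightarrow> cls f q"

lemma relu_nonneg: "relu z \<ge> 0" by (simp add: relu_def)
lemma relu_lip: "\<bar>relu a - relu b\<bar> \<le> \<bar>a - b\<bar>" by (simp add: relu_def)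
lemma relu_scale: "c \<ge> 0 \<Longrightarrow> relu (c * z) = c * relu z"
  by (simp add: relu_def max_def mult_le_0_iff zero_le_mult_iff) 

lemma cls_nonneg: "cls f q \<Longrightarrow> q \<ge> 0"
  by (induction rule: cls.induct) auto


lemma cls_eq: "cls f p \<Longrightarrow> (\<And>x. f x = g x) \<Longrightarrow> p = q \<Longrightarrow> cls g q"
proof -
  assume "cls f p" "\<And>x. f x = g x" "p = q"
  moreover have "f = g" using \<open>\<And>x. f x = g x\<close> by auto
  ultimately show ?thesis by simp
qed

lemma cls_scale: "cls f q \<Longrightarrow> cls (\<lambda>x. c * f x) (\<bar>c\<bar> * q)"
proof (induction rule: cls.induct)
  case (coord c' j)
  show ?case by (rule cls_eq[OF cls.coord[of "c*c'" j]]) (auto simp: abs_mult)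
next
  case (rl \<phi> q c')
  show ?case by (rule cls_eq[OF cls.rl[OF rl.hyps, of "c*c'"]]) (auto simp: abs_mult)
next
  case (add f p g q)
  show ?case by (rule cls_eq[OF cls.add[OF add.IH]]) (auto simp: algebra_simps)
next
  case zero
  show ?case by (rule cls_eq[OF cls.zero]) auto
next
  case (mono f p q)
  show ?case by (rule cls.mono[OF mono.IH]) (simp add: mono.hyps mult_left_mono)
qed

lemma cls_bound: "cls f q \<Longrightarrow> (\<forall>j. \<bar>x $ j\<bar> \<le> 1) \<Longrightarrow> \<bar>f x\<bar> \<le> q"
proof (induction rule: cls.induct)
  case (coord c j)
  then show ?case by (simp add: abs_mult mult_left_le)
next
  case (rl \<phi> q c)
  have "\<bar>relu (\<phi> x)\<bar> \<le> \<bar>\<phi> x\<bar>" by (simp add: relu_def)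
  also have "\<dots> \<le> q" using rl by auto
  finally have "\<bar>c * relu (\<phi> x)\<bar> \<le> \<bar>c\<bar> * q" by (simp add: abs_mult mult_left_mono)
  moreover have "\<bar>c\<bar> * q \<le> 3 * \<bar>c\<bar> * q" using rl cls_nonneg[OF rl.hyps]
    by (simp add: mult_nonneg_nonneg)
  ultimately show ?case by linarith
next
  case (add f p g q) then show ?case by (smt (verit))
qed auto

lemma cls_zero_at: "cls f q \<Longrightarrow> f 0 = 0"
  by (induction rule: cls.induct) (auto simp: relu_def)

lemma cls_sum: "finite I \<Longrightarrow> (\<And>i. i \<in> I \<Longrightarrow> cls (F i) (p i)) \<Longrightarrow> cls (\<lambda>x. \<Sum>i\<in>I. F i x) (\<Sum>i\<in>I. p i)"
proof (induction I rule: finite_induct)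
  case empty then show ?case by (simp add: cls.zero)
next
  case (insert a I)
  show ?case by (rule cls_eq[OF cls.add[OF insert.prems[of a] insert.IH]]) (use insert in auto)
qed

lemma cls_max: "cls f p \<Longrightarrow> cls g q \<Longrightarrow> cls (\<lambda>x. max (f x) (g x)) (3 * p + 4 * q)"
proof -
  assume f: "cls f p" and g: "cls g q"
  have "cls (\<lambda>x. f x + (-1) * g x) (p + q)"
    using cls.add[OF f cls_scale[OF g, of "-1"]] by simp
  from cls.rl[OF this, of 1] have "cls (\<lambda>x. 1 * relu (f x + (-1) * g x)) (3 * 1 * (p + q))" by simp
  from cls.add[OF g this] show ?thesis
    by (rule cls_eq) (auto simp: relu_def max_def)
qed

lemma pmat_nonneg: "pmat m D th l i j \<ge> 0"
  by (induction l arbitrary: i j) (auto intro!: add_nonneg_nonneg sum_nonneg mult_nonneg_nonneg)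


lemma net_cls: "cls (\<lambda>x. \<Sum>i<D. w i * hid m D th x l i) (\<Sum>j\<in>UNIV. \<Sum>i<D. \<bar>w i\<bar> * pmat m D th l i j)"
proof (induction l arbitrary: w)
  case 0
  have "cls (\<lambda>x. \<Sum>j\<in>UNIV. (\<Sum>i<D. w i * in_w th i j) * x $ j) (\<Sum>j\<in>UNIV. \<bar>\<Sum>i<D. w i * in_w th i j\<bar>)"
    by (rule cls_sum) (auto intro: cls.coord)
  then have "cls (\<lambda>x. \<Sum>i<D. w i * hid m D th x 0 i) (\<Sum>j\<in>UNIV. \<bar>\<Sum>i<D. w i * in_w th i j\<bar>)"
    by (rule cls_eq) (auto simp: sum_distrib_left sum_distrib_right mult.assoc intro: sum.swap)
  then show ?case
  proof (rule cls.mono)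
    show "(\<Sum>j\<in>UNIV. \<bar>\<Sum>i<D. w i * in_w th i j\<bar>) \<le> (\<Sum>j\<in>UNIV. \<Sum>i<D. \<bar>w i\<bar> * pmat m D th 0 i j)"
      by (intro sum_mono) (auto simp: abs_mult intro: order_trans[OF sum_abs])
  qed
next
  case (Suc l)
  define P where "P = pmat m D th l"
  define c where "c k = (\<Sum>i<D. w i * U_w th (Suc l) i k)" for k
  define N where "N k = (\<Sum>j\<in>UNIV. \<Sum>i'<D. \<bar>W_w th (Suc l) k i'\<bar> * P i' j)" for k
  define a where "a k = (\<Sum>i<D. \<bar>w i\<bar> * \<bar>U_w th (Suc l) i k\<bar>)" for k
  have N0: "N k \<ge> 0" for k unfolding N_def P_def by (auto intro!: sum_nonneg mult_nonneg_nonneg pmat_nonneg)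
  have ca: "\<bar>c k\<bar> \<le> a k" for k unfolding c_def a_def
    by (auto simp: abs_mult intro: order_trans[OF sum_abs])
  have h1: "cls (\<lambda>x. \<Sum>k<m. c k * relu (\<Sum>j<D. W_w th (Suc l) k j * hid m D th x l j)) (\<Sum>k<m. 3 * \<bar>c k\<bar> * N k)"
    by (rule cls_sum) (auto intro!: cls.rl Suc.IH simp: N_def P_def)
  have h2: "cls (\<lambda>x. \<Sum>i<D. w i * hid m D th x (Suc l) i) ((\<Sum>j\<in>UNIV. \<Sum>i<D. \<bar>w i\<bar> * P i j) + (\<Sum>k<m. 3 * \<bar>c k\<bar> * N k))"
    using cls.add[OF Suc.IH[of w] h1]
    by (rule cls_eq) (auto simp: P_def c_def sum.distrib sum_distrib_left sum_distrib_right algebra_simps intro: sum.swap)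
  have e: "(\<Sum>k<m. a k * N k) = (\<Sum>j\<in>UNIV. \<Sum>i<D. \<Sum>k<m. \<Sum>i'<D. \<bar>w i\<bar> * \<bar>U_w th (Suc l) i k\<bar> * \<bar>W_w th (Suc l) k i'\<bar> * P i' j)"
  proof -
    have "(\<Sum>k<m. a k * N k) = (\<Sum>k<m. \<Sum>j\<in>UNIV. \<Sum>i<D. \<Sum>i'<D. \<bar>w i\<bar> * \<bar>U_w th (Suc l) i k\<bar> * \<bar>W_w th (Suc l) k i'\<bar> * P i' j)"
      unfolding a_def N_def sum_distrib_left sum_distrib_right
    proof (simp add: mult.assoc)
      show "(\<Sum>k<m. \<Sum>n\<in>UNIV. \<Sum>na<D. \<Sum>nb<D. \<bar>w nb\<bar> * (\<bar>U_w th (Suc l) nb k\<bar> * (\<bar>W_w th (Suc l) k na\<bar> * P na n))) =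
          (\<Sum>k<m. \<Sum>j\<in>UNIV. \<Sum>i<D. \<Sum>i'<D. \<bar>w i\<bar> * (\<bar>U_w th (Suc l) i k\<bar> * (\<bar>W_w th (Suc l) k i'\<bar> * P i' j)))"
        by (rule sum.cong[OF refl], rule sum.cong[OF refl], rule sum.swap)
    qed
    also have "\<dots> = (\<Sum>j\<in>UNIV. \<Sum>k<m. \<Sum>i<D. \<Sum>i'<D. \<bar>w i\<bar> * \<bar>U_w th (Suc l) i k\<bar> * \<bar>W_w th (Suc l) k i'\<bar> * P i' j)"
      by (rule sum.swap)
    also have "\<dots> = (\<Sum>j\<in>UNIV. \<Sum>i<D. \<Sum>k<m. \<Sum>i'<D. \<bar>w i\<bar> * \<bar>U_w th (Suc l) i k\<bar> * \<bar>W_w th (Suc l) k i'\<bar> * P i' j)"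
      by (rule sum.cong[OF refl], rule sum.swap)
    finally show ?thesis .
  qed
  have "(\<Sum>k<m. 3 * \<bar>c k\<bar> * N k) \<le> 3 * (\<Sum>k<m. a k * N k)"
    unfolding sum_distrib_left by (rule sum_mono) (use ca N0 in \<open>auto intro: mult_right_mono\<close>)
  also have "3 * (\<Sum>k<m. a k * N k) = (\<Sum>j\<in>UNIV. \<Sum>i<D. \<bar>w i\<bar> * (3 * (\<Sum>k<m. \<Sum>i'<D. \<bar>U_w th (Suc l) i k\<bar> * \<bar>W_w th (Suc l) k i'\<bar> * P i' j)))"
    unfolding e by (simp add: sum_distrib_left algebra_simps)
  finally show ?case
    by (intro cls.mono[OF h2]) (simp add: P_def algebra_simps sum.distrib)
qed

lemma resnet_cls: "cls (\<lambda>x. resnet m D L x th) (path_norm m D L th)"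
proof -
  have "path_norm m D L th = (\<Sum>j\<in>UNIV. \<Sum>i<D. \<bar>out_w th i\<bar> * pmat m D th L i j)"
    unfolding path_norm_def by (intro sum.cong refl abs_of_nonneg sum_nonneg mult_nonneg_nonneg) (auto simp: pmat_nonneg)
  then show ?thesis using net_cls[where w="out_w th" and l=L] by (simp add: resnet_def)
qed


lemma cls_Max: "finite A \<Longrightarrow> card A = 2 ^ \<alpha> \<Longrightarrow> (\<And>a. a \<in> A \<Longrightarrow> cls (F a) (p a)) \<Longrightarrow>
   cls (\<lambda>x. Max ((\<lambda>a. F a x) ` A)) (7 ^ \<alpha> * (\<Sum>a\<in>A. p a))"
proof (induction \<alpha> arbitrary: A)
  case 0
  then obtain a where A: "A = {a}" by (auto simp: card_1_singleton_iff)
  show ?case using 0(3)[of a] by (simp add: A)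
next
  case (Suc \<alpha>)
  obtain A1 where A1: "A1 \<subseteq> A" "card A1 = 2 ^ \<alpha>"
    using obtain_subset_with_card_n[of "2 ^ \<alpha>" A] Suc.prems(2) by auto
  define A2 where "A2 = A - A1"
  have fin1: "finite A1" using A1 Suc.prems(1) finite_subset by blast
  have fin2: "finite A2" using Suc.prems(1) by (simp add: A2_def)
  have c2: "card A2 = 2 ^ \<alpha>" unfolding A2_def using A1 Suc.prems(1,2) fin1
    by (simp add: card_Diff_subset)
  have ne1: "A1 \<noteq> {}" using A1 by auto
  have ne2: "A2 \<noteq> {}" using c2 by auto
  have AU: "A = A1 \<union> A2" "A1 \<inter> A2 = {}" using A1 by (auto simp: A2_def)
  have h1: "cls (\<lambda>x. Max ((\<lambda>a. F a x) ` A1)) (7 ^ \<alpha> * (\<Sum>a\<in>A1. p a))"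
    using Suc.IH[OF fin1 A1(2)] Suc.prems(3) A1(1) by auto
  have h2: "cls (\<lambda>x. Max ((\<lambda>a. F a x) ` A2)) (7 ^ \<alpha> * (\<Sum>a\<in>A2. p a))"
    using Suc.IH[OF fin2 c2] Suc.prems(3) by (auto simp: A2_def)
  have s1: "(\<Sum>a\<in>A1. p a) \<ge> 0" using Suc.prems(3) A1(1) cls_nonneg by (auto intro!: sum_nonneg)
  have s2: "(\<Sum>a\<in>A2. p a) \<ge> 0" using Suc.prems(3) cls_nonneg by (auto intro!: sum_nonneg simp: A2_def)
  have "cls (\<lambda>x. max (Max ((\<lambda>a. F a x) ` A1)) (Max ((\<lambda>a. F a x) ` A2)))
          (3 * (7 ^ \<alpha> * (\<Sum>a\<in>A1. p a)) + 4 * (7 ^ \<alpha> * (\<Sum>a\<in>A2. p a)))"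
    by (rule cls_max[OF h1 h2])
  then have "cls (\<lambda>x. Max ((\<lambda>a. F a x) ` A)) (3 * (7 ^ \<alpha> * (\<Sum>a\<in>A1. p a)) + 4 * (7 ^ \<alpha> * (\<Sum>a\<in>A2. p a)))"
    by (rule cls_eq) (auto simp: AU image_Un Max_Un fin1 fin2 ne1 ne2)
  then show ?case
  proof (rule cls.mono)
    have "(\<Sum>a\<in>A. p a) = (\<Sum>a\<in>A1. p a) + (\<Sum>a\<in>A2. p a)"
      unfolding AU(1) by (rule sum.union_disjoint[OF fin1 fin2 AU(2)])
    then show "3 * (7 ^ \<alpha> * (\<Sum>a\<in>A1. p a)) + 4 * (7 ^ \<alpha> * (\<Sum>a\<in>A2. p a)) \<le> 7 ^ Suc \<alpha> * (\<Sum>a\<in>A. p a)"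
      using s1 s2 by (simp add: algebra_simps)
  qed
qed


abbreviation T :: "nat \<Rightarrow> (nat \<Rightarrow> real) set" where
  "T n \<equiv> {..<n} \<rightarrow>\<^sub>E {-1, 1::real}"

lemma sum_T_Suc: "(\<Sum>\<tau>\<in>T (Suc n). F \<tau>) = (\<Sum>\<tau>\<in>T n. F (\<tau>(n := 1)) + F (\<tau>(n := -1)))"
proof -
  have "(\<Sum>\<tau>\<in>T (Suc n). F \<tau>) = (\<Sum>\<tau>\<in>Pi\<^sub>E (insert n {..<n}) (\<lambda>_. {-1,1::real}). F \<tau>)"
    by (simp add: lessThan_Suc)
  also have "\<dots> = (\<Sum>z\<in>{-1,1::real} \<times> T n. F ((\<lambda>(y, g). g(n := y)) z))"
    unfolding PiE_insert_eq by (subst sum.reindex) (auto intro!: inj_combinator)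
  also have "\<dots> = (\<Sum>y\<in>{-1,1::real}. \<Sum>g\<in>T n. F (g(n := y)))"
    by (subst sum.cartesian_product) (simp add: case_prod_beta)
  also have "\<dots> = (\<Sum>\<tau>\<in>T n. F (\<tau>(n := 1)) + F (\<tau>(n := -1)))"
    by (simp add: sum.distrib add.commute)
  finally show ?thesis .
qed

lemma T_upd_sum: "\<tau> \<in> T n \<Longrightarrow> (\<Sum>i<Suc n. (\<tau>(n := s)) i * v i) = (\<Sum>i<n. \<tau> i * v i) + s * v n"
  by simp

lemma T_abs: "\<tau> \<in> T n \<Longrightarrow> i < n \<Longrightarrow> \<bar>\<tau> i\<bar> = 1"
  by (auto simp: PiE_def Pi_def)

lemma bdd_above_bnd: "(\<And>\<iota>. \<iota> \<in> I \<Longrightarrow> \<bar>(f \<iota>::real)\<bar> \<le> K) \<Longrightarrow> bdd_above (f ` I)"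
  by (rule bdd_aboveI2[where M=K]) (meson abs_le_D1)

lemma two_point:
  fixes c w :: "'i \<Rightarrow> real"
  assumes I: "I \<noteq> {}" and c: "\<And>\<iota>. \<iota> \<in> I \<Longrightarrow> \<bar>c \<iota>\<bar> \<le> K1" and w: "\<And>\<iota>. \<iota> \<in> I \<Longrightarrow> \<bar>w \<iota>\<bar> \<le> K2"
    and psi: "\<And>a b. \<bar>\<psi> a - \<psi> b\<bar> \<le> \<bar>a - b\<bar>"
  shows "(SUP \<iota>\<in>I. c \<iota> + \<psi> (w \<iota>)) + (SUP \<iota>\<in>I. c \<iota> - \<psi> (w \<iota>)) \<le> (SUP \<iota>\<in>I. c \<iota> + w \<iota>) + (SUP \<iota>\<in>I. c \<iota> - w \<iota>)"
proof -
  define R where "R = (SUP \<iota>\<in>I. c \<iota> + w \<iota>) + (SUP \<iota>\<in>I. c \<iota> - w \<iota>)"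
  have b1: "bdd_above ((\<lambda>\<iota>. c \<iota> + w \<iota>) ` I)"
    by (rule bdd_above_bnd[where K="K1+K2"]) (use c w in \<open>smt (verit)\<close>)
  have b2: "bdd_above ((\<lambda>\<iota>. c \<iota> - w \<iota>) ` I)"
    by (rule bdd_above_bnd[where K="K1+K2"]) (use c w in \<open>smt (verit)\<close>)
  have key: "c \<iota> + \<psi> (w \<iota>) + (c \<iota>' - \<psi> (w \<iota>')) \<le> R" if "\<iota> \<in> I" "\<iota>' \<in> I" for \<iota> \<iota>'
  proof -
    have u1: "c \<iota>1 + w \<iota>1 \<le> (SUP \<iota>\<in>I. c \<iota> + w \<iota>)" if "\<iota>1 \<in> I" for \<iota>1
      by (rule cSUP_upper[OF that b1])
    have u2: "c \<iota>1 - w \<iota>1 \<le> (SUP \<iota>\<in>I. c \<iota> - w \<iota>)" if "\<iota>1 \<in> I" for \<iota>1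
      by (rule cSUP_upper[OF that b2])
    have "\<psi> (w \<iota>) - \<psi> (w \<iota>') \<le> \<bar>w \<iota> - w \<iota>'\<bar>" using psi[of "w \<iota>" "w \<iota>'"] by linarith
    then show ?thesis using u1[OF that(1)] u2[OF that(1)] u1[OF that(2)] u2[OF that(2)]
      unfolding R_def by (cases "w \<iota> \<ge> w \<iota>'") auto
  qed
  have "c \<iota>' - \<psi> (w \<iota>') \<le> R - (SUP \<iota>\<in>I. c \<iota> + \<psi> (w \<iota>))" if "\<iota>' \<in> I" for \<iota>'
  proof -
    have "(SUP \<iota>\<in>I. c \<iota> + \<psi> (w \<iota>)) \<le> R - (c \<iota>' - \<psi> (w \<iota>'))"
      by (rule cSUP_least[OF I]) (use key that in force)
    then show ?thesis by linarith
  qed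
  then have "(SUP \<iota>\<in>I. c \<iota> - \<psi> (w \<iota>)) \<le> R - (SUP \<iota>\<in>I. c \<iota> + \<psi> (w \<iota>))"
    by (intro cSUP_least[OF I]) auto
  then show ?thesis unfolding R_def by linarith
qed


lemma sum_T_bound: "\<tau> \<in> T n \<Longrightarrow> (\<And>i. i < n \<Longrightarrow> \<bar>u i\<bar> \<le> K) \<Longrightarrow> \<bar>\<Sum>i<n. \<tau> i * u i\<bar> \<le> real n * K"
proof -
  assume t: "\<tau> \<in> T n" and u: "\<And>i. i < n \<Longrightarrow> \<bar>u i\<bar> \<le> K"
  have "\<bar>\<Sum>i<n. \<tau> i * u i\<bar> \<le> (\<Sum>i<n. \<bar>\<tau> i * u i\<bar>)" by (rule sum_abs)
  also have "\<dots> \<le> (\<Sum>i<n. K)" by (rule sum_mono) (use t u T_abs in \<open>auto simp: abs_mult\<close>)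
  finally show ?thesis by simp
qed

lemma contraction:
  fixes v :: "'i \<Rightarrow> nat \<Rightarrow> real" and b :: "'i \<Rightarrow> real"
  assumes I: "I \<noteq> {}" and v: "\<And>\<iota> i. \<iota> \<in> I \<Longrightarrow> \<bar>v \<iota> i\<bar> \<le> K"
    and b: "\<And>\<iota>. \<iota> \<in> I \<Longrightarrow> \<bar>b \<iota>\<bar> \<le> Kb"
    and psi: "\<And>a c. \<bar>\<psi> a - \<psi> c\<bar> \<le> \<bar>a - c\<bar>"
  shows "(\<Sum>\<tau>\<in>T n. SUP \<iota>\<in>I. b \<iota> + (\<Sum>i<n. \<tau> i * \<psi> (v \<iota> i)))
       \<le> (\<Sum>\<tau>\<in>T n. SUP \<iota>\<in>I. b \<iota> + (\<Sum>i<n. \<tau> i * v \<iota> i))"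
  using b
proof (induction n arbitrary: b Kb)
  case 0
  show ?case by simp
next
  case (Suc n)
  have pv: "\<bar>\<psi> (v \<iota> i)\<bar> \<le> \<bar>\<psi> 0\<bar> + K" if "\<iota> \<in> I" for \<iota> i
    using psi[of "v \<iota> i" 0] v[OF that, of i] by linarith
  define bp where "bp s \<iota> = b \<iota> + s * \<psi> (v \<iota> n)" for s \<iota>
  have bpb: "\<bar>bp s \<iota>\<bar> \<le> Kb + (\<bar>\<psi> 0\<bar> + K)" if "\<iota> \<in> I" "s \<in> {-1, 1}" for s \<iota>
    using Suc.prems[OF that(1)] pv[OF that(1), of n] that(2) unfolding bp_def by auto
  have IHs: "(\<Sum>\<tau>\<in>T n. SUP \<iota>\<in>I. bp s \<iota> + (\<Sum>i<n. \<tau> i * \<psi> (v \<iota> i)))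
       \<le> (\<Sum>\<tau>\<in>T n. SUP \<iota>\<in>I. bp s \<iota> + (\<Sum>i<n. \<tau> i * v \<iota> i))" if "s \<in> {-1,1}" for s
    by (rule Suc.IH) (use bpb that in auto)
  have eq1: "(\<Sum>\<tau>\<in>T (Suc n). SUP \<iota>\<in>I. b \<iota> + (\<Sum>i<Suc n. \<tau> i * \<psi> (v \<iota> i)))
     = (\<Sum>\<tau>\<in>T n. SUP \<iota>\<in>I. bp 1 \<iota> + (\<Sum>i<n. \<tau> i * \<psi> (v \<iota> i)))
       + (\<Sum>\<tau>\<in>T n. SUP \<iota>\<in>I. bp (-1) \<iota> + (\<Sum>i<n. \<tau> i * \<psi> (v \<iota> i)))"
    unfolding sum_T_Suc sum.distrib[symmetric]
    apply (rule sum.cong[OF refl]) apply (rule arg_cong2[where f="(+)"])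
    apply (rule SUP_cong[OF refl], simp add: bp_def T_upd_sum algebra_simps)+ done
  define c where "c \<tau> \<iota> = b \<iota> + (\<Sum>i<n. \<tau> i * v \<iota> i)" for \<tau> \<iota>
  have eq2: "(\<Sum>\<tau>\<in>T n. SUP \<iota>\<in>I. bp 1 \<iota> + (\<Sum>i<n. \<tau> i * v \<iota> i))
       + (\<Sum>\<tau>\<in>T n. SUP \<iota>\<in>I. bp (-1) \<iota> + (\<Sum>i<n. \<tau> i * v \<iota> i))
     = (\<Sum>\<tau>\<in>T n. (SUP \<iota>\<in>I. c \<tau> \<iota> + \<psi> (v \<iota> n)) + (SUP \<iota>\<in>I. c \<tau> \<iota> - \<psi> (v \<iota> n)))"
    unfolding sum.distrib[symmetric]
    apply (rule sum.cong[OF refl]) apply (rule arg_cong2[where f="(+)"])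
    apply (rule SUP_cong[OF refl], simp add: bp_def c_def)+ done
  have ineq: "(\<Sum>\<tau>\<in>T n. (SUP \<iota>\<in>I. c \<tau> \<iota> + \<psi> (v \<iota> n)) + (SUP \<iota>\<in>I. c \<tau> \<iota> - \<psi> (v \<iota> n)))
     \<le> (\<Sum>\<tau>\<in>T n. (SUP \<iota>\<in>I. c \<tau> \<iota> + v \<iota> n) + (SUP \<iota>\<in>I. c \<tau> \<iota> - v \<iota> n))"
  proof (rule sum_mono)
    fix \<tau> assume t: "\<tau> \<in> T n"
    have cb: "\<bar>c \<tau> \<iota>\<bar> \<le> Kb + real n * K" if "\<iota> \<in> I" for \<iota>
      using Suc.prems[OF that] sum_T_bound[OF t, of "v \<iota>" K] v[OF that] unfolding c_def by fastforce
    show "(SUP \<iota>\<in>I. c \<tau> \<iota> + \<psi> (v \<iota> n)) + (SUP \<iota>\<in>I. c \<tau> \<iota> - \<psi> (v \<iota> n))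
         \<le> (SUP \<iota>\<in>I. c \<tau> \<iota> + v \<iota> n) + (SUP \<iota>\<in>I. c \<tau> \<iota> - v \<iota> n)"
      by (rule two_point[OF I cb v psi])
  qed
  have eq3: "(\<Sum>\<tau>\<in>T n. (SUP \<iota>\<in>I. c \<tau> \<iota> + v \<iota> n) + (SUP \<iota>\<in>I. c \<tau> \<iota> - v \<iota> n))
     = (\<Sum>\<tau>\<in>T (Suc n). SUP \<iota>\<in>I. b \<iota> + (\<Sum>i<Suc n. \<tau> i * v \<iota> i))"
    unfolding sum_T_Suc
    apply (rule sum.cong[OF refl]) apply (rule arg_cong2[where f="(+)"])
    apply (rule SUP_cong[OF refl], simp add: c_def)+ done
  show ?case
    using IHs[OF insertI2[OF singletonI]] IHs[OF insertI1] eq1 eq2 ineq eq3 by linarith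
qed


lemma cosh_bound_pos: "(y::real) \<ge> 0 \<Longrightarrow> exp y + exp (-y) \<le> 2 * exp (y^2 / 2)"
proof -
  assume y: "y \<ge> 0"
  have eq: "1 + (1/2) * (exp (2*y) - 1) = (1 + exp (2*y)) / 2" by (simp add: field_simps)
  have "- (2*y) * (1/2) + ln (1 + (1/2) * (exp (2*y) - 1)) \<le> (2*y)^2 / 8"
    using Hoeffdings_lemma_aux[of "2*y" "1/2"] y by simp
  then have "- (2*y) * (1/2) + ln ((1 + exp (2*y)) / 2) \<le> (2*y)^2 / 8"
    unfolding eq .
  moreover have "(2*y)^2 / 8 = y^2/2" by (simp add: power2_eq_square)
  ultimately have "ln ((1 + exp (2*y)) / 2) \<le> y + y^2/2" by linarith
  then have "(1 + exp (2*y)) / 2 \<le> exp (y + y^2/2)"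
    by (metis add_pos_pos divide_pos_pos exp_gt_zero exp_le_cancel_iff exp_ln zero_less_one zero_less_numeral)
  then have "exp (-y) * ((1 + exp (2*y)) / 2) \<le> exp (-y) * exp (y + y^2/2)"
    by (intro mult_left_mono) auto
  moreover have "exp (-y) * ((1 + exp (2*y)) / 2) = (exp y + exp (-y)) / 2"
    by (simp add: field_simps flip: exp_add)
  moreover have "exp (-y) * exp (y + y^2/2) = exp (y^2/2)"
    by (simp flip: exp_add)
  ultimately show ?thesis by simp
qed

lemma cosh_bound: "exp (y::real) + exp (-y) \<le> 2 * exp (y^2 / 2)"
  using cosh_bound_pos[of y] cosh_bound_pos[of "-y"] by (cases "y \<ge> 0") (auto simp: add.commute)


lemma finite_T: "finite (T n)" by (simp add: finite_PiE)
lemma card_T: "card (T n) = 2 ^ n" by (simp add: card_PiE numeral_2_eq_2)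

lemma exp_sum_T:
  assumes u: "\<And>i. i < n \<Longrightarrow> \<bar>u i\<bar> \<le> 1"
  shows "(\<Sum>\<tau>\<in>T n. exp (l * (\<Sum>i<n. \<tau> i * u i))) \<le> 2 ^ n * exp (l^2 * real n / 2)"
proof -
  have "(\<Sum>\<tau>\<in>T n. exp (l * (\<Sum>i<n. \<tau> i * u i))) = (\<Sum>\<tau>\<in>T n. \<Prod>i<n. exp (l * u i * \<tau> i))"
    by (intro sum.cong refl) (simp add: sum_distrib_left exp_sum mult_ac)
  also have "\<dots> = (\<Prod>i<n. \<Sum>s\<in>{-1,1::real}. exp (l * u i * s))"
    by (rule prod_sum_PiE[symmetric]) auto
  also have "\<dots> \<le> (\<Prod>i<n. 2 * exp (l^2 / 2))"
  proof (rule prod_mono)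
    fix i assume i: "i \<in> {..<n}"
    have "(\<Sum>s\<in>{-1,1::real}. exp (l * u i * s)) = exp (l * u i) + exp (- (l * u i))" by simp
    also have "\<dots> \<le> 2 * exp ((l * u i)^2 / 2)" by (rule cosh_bound)
    also have "\<dots> \<le> 2 * exp (l^2 / 2)"
    proof -
      have "\<bar>u i\<bar> * \<bar>u i\<bar> \<le> 1 * 1" using u[of i] i by (intro mult_mono) auto
      then have "(u i)^2 \<le> 1" by (simp add: power2_eq_square)
      then have "l^2 * (u i)^2 \<le> l^2 * 1" by (intro mult_left_mono) auto
      then show ?thesis by (simp add: power_mult_distrib)
    qed
    finally show "0 \<le> (\<Sum>s\<in>{-1,1::real}. exp (l * u i * s)) \<and> (\<Sum>s\<in>{-1,1::real}. exp (l * u i * s)) \<le> 2 * exp (l^2 / 2)"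
      by (auto intro: add_nonneg_nonneg)
  qed
  also have "\<dots> = 2 ^ n * exp (l^2 * real n / 2)"
    by (simp add: power_mult_distrib exp_of_nat_mult[symmetric] mult_ac)
  finally show ?thesis .
qed

lemma massart:
  fixes w :: "'j \<Rightarrow> nat \<Rightarrow> real"
  assumes J: "finite J" "2 \<le> card J" and w: "\<And>j i. j \<in> J \<Longrightarrow> \<bar>w j i\<bar> \<le> 1"
  shows "(\<Sum>\<tau>\<in>T n. Max ((\<lambda>j. \<Sum>i<n. \<tau> i * w j i) ` J)) \<le> 2 ^ n * sqrt (2 * real n * ln (real (card J)))"
proof (cases "n = 0")
  case True
  have "J \<noteq> {}" using J by auto
  then have "(\<lambda>j. 0::real) ` J = {0}" by auto
  then show ?thesis using True by simp
next
  case False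
  have Jne: "J \<noteq> {}" using J by auto
  define S where "S = (\<Sum>\<tau>\<in>T n. Max ((\<lambda>j. \<Sum>i<n. \<tau> i * w j i) ` J))"
  define Nn :: real where "Nn = 2 ^ n"
  define \<mu> where "\<mu> = S / Nn"
  define cJ where "cJ = real (card J)"
  have cJ: "cJ \<ge> 2" using J by (simp add: cJ_def)
  have lncJ: "ln cJ > 0" using cJ by simp
  define l where "l = sqrt (2 * ln cJ / real n)"
  have l: "l > 0" using lncJ False by (simp add: l_def)
  have l2: "l^2 = 2 * ln cJ / real n" unfolding l_def using lncJ by simp
  define A where "A \<tau> = Max ((\<lambda>j. \<Sum>i<n. \<tau> i * w j i) ` J)" for \<tau>
  have Nn: "Nn > 0" by (simp add: Nn_def)
  have "(\<Sum>\<tau>\<in>T n. exp (l * \<mu>) * (1 + (l * A \<tau> - l * \<mu>))) \<le> (\<Sum>\<tau>\<in>T n. exp (l * A \<tau>))"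
  proof (rule sum_mono)
    fix \<tau>
    have "exp (l * \<mu>) * (1 + (l * A \<tau> - l * \<mu>)) \<le> exp (l * \<mu>) * exp (l * A \<tau> - l * \<mu>)"
      by (intro mult_left_mono) auto
    also have "\<dots> = exp (l * A \<tau>)" by (simp flip: exp_add)
    finally show "exp (l * \<mu>) * (1 + (l * A \<tau> - l * \<mu>)) \<le> exp (l * A \<tau>)" .
  qed
  moreover have "(\<Sum>\<tau>\<in>T n. exp (l * \<mu>) * (1 + (l * A \<tau> - l * \<mu>))) = exp (l * \<mu>) * Nn"
  proof -
    have "(\<Sum>\<tau>\<in>T n. exp (l * \<mu>) * (1 + (l * A \<tau> - l * \<mu>)))
        = exp (l * \<mu>) * (Nn + l * S - l * \<mu> * Nn)"
      by (simp add: sum_distrib_left sum.distrib sum_subtractf card_T Nn_def S_def A_def algebra_simps flip: sum_distrib_left)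
    also have "l * \<mu> * Nn = l * S" using Nn by (simp add: \<mu>_def)
    finally show ?thesis by simp
  qed
  moreover have "(\<Sum>\<tau>\<in>T n. exp (l * A \<tau>)) \<le> (\<Sum>\<tau>\<in>T n. \<Sum>j\<in>J. exp (l * (\<Sum>i<n. \<tau> i * w j i)))"
  proof (rule sum_mono)
    fix \<tau>
    obtain j where j: "j \<in> J" "A \<tau> = (\<Sum>i<n. \<tau> i * w j i)"
    proof -
      have "Max ((\<lambda>j. \<Sum>i<n. \<tau> i * w j i) ` J) \<in> (\<lambda>j. \<Sum>i<n. \<tau> i * w j i) ` J"
        using J Jne by (intro Max_in) auto
      then show ?thesis using that unfolding A_def by blast
    qed
    show "exp (l * A \<tau>) \<le> (\<Sum>j\<in>J. exp (l * (\<Sum>i<n. \<tau> i * w j i)))"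
      unfolding j(2) by (rule member_le_sum[OF j(1)]) (auto simp: J)
  qed
  moreover have "(\<Sum>\<tau>\<in>T n. \<Sum>j\<in>J. exp (l * (\<Sum>i<n. \<tau> i * w j i))) \<le> (\<Sum>j\<in>J. 2 ^ n * exp (l^2 * real n / 2))"
    by (subst sum.swap, rule sum_mono, rule exp_sum_T) (use w in auto)
  ultimately have "exp (l * \<mu>) * Nn \<le> cJ * (Nn * exp (l^2 * real n / 2))"
    unfolding sum_constant cJ_def Nn_def by linarith
  then have "exp (l * \<mu>) \<le> cJ * exp (l^2 * real n / 2)" using Nn by (simp add: mult_ac)
  also have "\<dots> = exp (ln cJ + l^2 * real n / 2)" using cJ by (simp add: exp_add)
  finally have "l * \<mu> \<le> ln cJ + l^2 * real n / 2" by simp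
  also have "\<dots> = l * (l * real n)"
  proof -
    have "l * (l * real n) = l^2 * real n" by (simp add: power2_eq_square)
    also have "\<dots> = 2 * ln cJ" using False unfolding l2 by simp
    finally show ?thesis using False unfolding l2 by simp
  qed
  finally have "\<mu> \<le> l * real n" using l by simp
  moreover have "l * real n = sqrt (2 * real n * ln cJ)"
  proof -
    have "l * real n = sqrt (l^2 * (real n)^2)" using l by (simp add: real_sqrt_mult)
    also have "l^2 * (real n)^2 = 2 * real n * ln cJ" using False unfolding l2 by (simp add: power2_eq_square)
    finally show ?thesis .
  qed
  ultimately have "S \<le> Nn * sqrt (2 * real n * ln cJ)" using Nn by (simp add: \<mu>_def field_simps)
  then show ?thesis by (simp add: S_def Nn_def cJ_def)
qed


lemma cls_zero_fun: "cls f 0 \<Longrightarrow> (\<forall>j. \<bar>x $ j\<bar> \<le> 1) \<Longrightarrow> f x = 0"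
  using cls_bound[of f 0 x] by simp

lemma cls_unit: "cls f q \<Longrightarrow> q > 0 \<Longrightarrow> cls (\<lambda>x. (1/q) * f x) 1"
  using cls_scale[of f q "1/q"] by simp

locale sample =
  fixes n :: nat and y :: "nat \<Rightarrow> real^'d::finite"
  assumes ybnd: "\<And>i j. \<bar>y i $ j\<bar> \<le> 1"
begin

definition C1 :: "(real^'d \<Rightarrow> real) set" where "C1 = {f. cls f 1}"

definition Phi :: "(nat \<Rightarrow> real) \<Rightarrow> real" where
  "Phi \<tau> = (SUP f\<in>C1. \<Sum>i<n. \<tau> i * f (y i))"

lemma C1_ne: "C1 \<noteq> {}"
proof -
  have "(\<lambda>x. 0) \<in> C1" unfolding C1_def using cls.mono[OF cls.zero, of 1] by simp
  then show ?thesis by auto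
qed

lemma zero_C1: "(\<lambda>x. 0) \<in> C1"
  unfolding C1_def using cls.mono[OF cls.zero, of 1] by simp

lemma C1_bnd: "f \<in> C1 \<Longrightarrow> \<bar>f (y i)\<bar> \<le> 1"
  unfolding C1_def using cls_bound ybnd by blast

lemma sup_bdd:
  assumes "\<tau> \<in> T n" and "\<And>f i. f \<in> C1 \<Longrightarrow> \<bar>g f i\<bar> \<le> 1"
  shows "bdd_above ((\<lambda>f. \<Sum>i<n. \<tau> i * g f i) ` C1)"
  by (rule bdd_above_bnd[where K="real n * 1"]) (rule sum_T_bound[OF assms(1)], use assms(2) in auto)

lemma Phi_upper: "\<tau> \<in> T n \<Longrightarrow> f \<in> C1 \<Longrightarrow> (\<Sum>i<n. \<tau> i * f (y i)) \<le> Phi \<tau>"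
  unfolding Phi_def by (rule cSUP_upper) (auto intro!: sup_bdd C1_bnd)

lemma Phi_nonneg: "\<tau> \<in> T n \<Longrightarrow> Phi \<tau> \<ge> 0"
  using Phi_upper[OF _ zero_C1] by simp

lemma cls_le_Phi: "cls f q \<Longrightarrow> \<tau> \<in> T n \<Longrightarrow> (\<Sum>i<n. \<tau> i * f (y i)) \<le> q * Phi \<tau>"
proof -
  assume f: "cls f q" and t: "\<tau> \<in> T n"
  have q: "q \<ge> 0" using cls_nonneg[OF f] .
  show ?thesis
  proof (cases "q = 0")
    case True
    then have "f (y i) = 0" for i using cls_zero_fun f ybnd by blast
    then show ?thesis using True by simp
  next
    case False
    then have qp: "q > 0" using q by simp
    have "(\<lambda>x. (1/q) * f x) \<in> C1" using cls_unit[OF f qp] by (simp add: C1_def)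
    from Phi_upper[OF t this]
    have "(\<Sum>i<n. \<tau> i * ((1/q) * f (y i))) \<le> Phi \<tau>" .
    then have "(1/q) * (\<Sum>i<n. \<tau> i * f (y i)) \<le> Phi \<tau>"
      by (simp add: sum_distrib_left mult_ac)
    then show ?thesis using qp by (simp add: field_simps)
  qed
qed

definition Bp :: "(nat \<Rightarrow> real) \<Rightarrow> real" where
  "Bp \<tau> = (SUP f\<in>C1. \<Sum>i<n. \<tau> i * relu (f (y i)))"
definition Bm :: "(nat \<Rightarrow> real) \<Rightarrow> real" where
  "Bm \<tau> = (SUP f\<in>C1. \<Sum>i<n. \<tau> i * - relu (f (y i)))"
definition Aa :: "(nat \<Rightarrow> real) \<Rightarrow> real" where
  "Aa \<tau> = Max ((\<lambda>(j, s). \<Sum>i<n. \<tau> i * (if i < n then s * y i $ j else 0)) ` (UNIV \<times> {-1, 1::real}))"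

lemma relu_abs_le: "\<bar>relu z\<bar> \<le> \<bar>z\<bar>" by (simp add: relu_def)

lemma Bp_upper: "\<tau> \<in> T n \<Longrightarrow> f \<in> C1 \<Longrightarrow> (\<Sum>i<n. \<tau> i * relu (f (y i))) \<le> Bp \<tau>"
  unfolding Bp_def
  by (rule cSUP_upper) (auto intro!: sup_bdd intro: order_trans[OF relu_abs_le C1_bnd])

lemma Bm_upper: "\<tau> \<in> T n \<Longrightarrow> f \<in> C1 \<Longrightarrow> (\<Sum>i<n. \<tau> i * - relu (f (y i))) \<le> Bm \<tau>"
  unfolding Bm_def
proof (rule cSUP_upper)
  assume t: "\<tau> \<in> T n"
  show "bdd_above ((\<lambda>f. \<Sum>i<n. \<tau> i * - relu (f (y i))) ` C1)"
    by (rule sup_bdd[OF t]) (metis abs_minus_cancel order_trans relu_abs_le C1_bnd)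
qed

lemma Bp_nonneg: "\<tau> \<in> T n \<Longrightarrow> Bp \<tau> \<ge> 0"
  using Bp_upper[OF _ zero_C1] by (simp add: relu_def)
lemma Bm_nonneg: "\<tau> \<in> T n \<Longrightarrow> Bm \<tau> \<ge> 0"
  using Bm_upper[OF _ zero_C1] by (simp add: relu_def)

lemma coord_le_Aa: "(\<Sum>i<n. \<tau> i * (s * y i $ j)) \<le> Aa \<tau>" if "s \<in> {-1,1}"
proof -
  have "(\<Sum>i<n. \<tau> i * (s * y i $ j)) = (\<Sum>i<n. \<tau> i * (if i < n then s * y i $ j else 0))"
    by (rule sum.cong) auto
  also have "\<dots> \<le> Aa \<tau>" unfolding Aa_def
    by (rule Max_ge) (use that in \<open>auto intro!: imageI[where f="\<lambda>(j, s). \<Sum>i<n. \<tau> i * (if i < n then s * y i $ j else 0)" and x="(j,s)", simplified]\<close>)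
  finally show ?thesis .
qed

lemma Aa_nonneg: "Aa \<tau> \<ge> 0"
proof -
  fix j :: 'd
  have "(\<Sum>i<n. \<tau> i * (1 * y i $ j)) \<le> Aa \<tau>" by (rule coord_le_Aa) auto
  moreover have "(\<Sum>i<n. \<tau> i * (-1 * y i $ j)) \<le> Aa \<tau>" by (rule coord_le_Aa) auto
  moreover have "(\<Sum>i<n. \<tau> i * (-1 * y i $ j)) = - (\<Sum>i<n. \<tau> i * (1 * y i $ j))"
    by (simp add: sum_negf[symmetric])
  ultimately show ?thesis by linarith
qed

lemma pointwise:
  assumes t: "\<tau> \<in> T n"
  shows "cls f q \<Longrightarrow> (\<Sum>i<n. \<tau> i * f (y i)) \<le> q * max (Aa \<tau>) ((Bp \<tau> + Bm \<tau>) / 3)"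
proof (induction rule: cls.induct)
  case (coord c j)
  have M: "Aa \<tau> \<le> max (Aa \<tau>) ((Bp \<tau> + Bm \<tau>) / 3)" by simp
  show ?case
  proof (cases "c \<ge> 0")
    case True
    have "(\<Sum>i<n. \<tau> i * (c * y i $ j)) = c * (\<Sum>i<n. \<tau> i * (1 * y i $ j))"
      by (simp add: sum_distrib_left mult_ac)
    also have "\<dots> \<le> c * Aa \<tau>" by (intro mult_left_mono coord_le_Aa True) auto
    finally show ?thesis using True M by (smt (verit) mult_left_mono)
  next
    case False
    have "(\<Sum>i<n. \<tau> i * (c * y i $ j)) = (-c) * (\<Sum>i<n. \<tau> i * (-1 * y i $ j))"
      by (simp add: sum_distrib_left mult_ac)
    also have "\<dots> \<le> (-c) * Aa \<tau>" using False by (intro mult_left_mono coord_le_Aa) auto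
    finally show ?thesis using False M by (smt (verit) mult_left_mono)
  qed
next
  case (rl \<phi> q c)
  have q: "q \<ge> 0" using cls_nonneg[OF rl.hyps] .
  have Bs: "0 \<le> Bp \<tau>" "0 \<le> Bm \<tau>" using Bp_nonneg[OF t] Bm_nonneg[OF t] by auto
  have M: "(Bp \<tau> + Bm \<tau>) / 3 \<le> max (Aa \<tau>) ((Bp \<tau> + Bm \<tau>) / 3)" by simp
  show ?case
  proof (cases "q = 0")
    case True
    then have "\<phi> (y i) = 0" for i using cls_zero_fun rl.hyps ybnd by blast
    then show ?thesis using True by (simp add: relu_def)
  next
    case False
    then have qp: "q > 0" using q by simp
    define \<phi>' where "\<phi>' = (\<lambda>x. (1/q) * \<phi> x)"
    have C: "\<phi>' \<in> C1" using cls_unit[OF rl.hyps qp] by (simp add: C1_def \<phi>'_def)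
    have rq: "relu (\<phi> x) = q * relu (\<phi>' x)" for x
      using relu_scale[of q "\<phi>' x"] qp by (simp add: \<phi>'_def)
    have "(\<Sum>i<n. \<tau> i * (c * relu (\<phi> (y i)))) = c * q * (\<Sum>i<n. \<tau> i * relu (\<phi>' (y i)))"
      by (simp add: rq sum_distrib_left mult_ac)
    also have "\<dots> \<le> 3 * \<bar>c\<bar> * q * ((Bp \<tau> + Bm \<tau>) / 3)"
    proof (cases "c \<ge> 0")
      case True
      have "c * q * (\<Sum>i<n. \<tau> i * relu (\<phi>' (y i))) \<le> c * q * Bp \<tau>"
        using Bp_upper[OF t C] True qp by (intro mult_left_mono) auto
      also have "\<dots> \<le> c * q * (Bp \<tau> + Bm \<tau>)" using True qp Bs by (intro mult_left_mono) auto
      finally show ?thesis using True by simp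
    next
      case False
      have cq: "0 \<le> (-c) * q" using False qp by (simp add: mult_nonpos_nonneg)
      have "c * q * (\<Sum>i<n. \<tau> i * relu (\<phi>' (y i))) = (-c) * q * (\<Sum>i<n. \<tau> i * - relu (\<phi>' (y i)))"
        by (simp add: sum_negf)
      also have "\<dots> \<le> (-c) * q * Bm \<tau>"
        using Bm_upper[OF t C] cq by (intro mult_left_mono) auto
      also have "\<dots> \<le> (-c) * q * (Bp \<tau> + Bm \<tau>)" using cq Bs by (intro mult_left_mono) auto
      finally show ?thesis using False by simp
    qed
    also have "\<dots> \<le> 3 * \<bar>c\<bar> * q * max (Aa \<tau>) ((Bp \<tau> + Bm \<tau>) / 3)"
      using M q by (intro mult_left_mono) auto
    finally show ?thesis .
  qed
next
  case (add f p g q)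
  then show ?case by (simp add: sum.distrib distrib_left distrib_right)
next
  case zero
  then show ?case by simp
next
  case (mono f p q)
  have "0 \<le> max (Aa \<tau>) ((Bp \<tau> + Bm \<tau>) / 3)" using Aa_nonneg[of \<tau>] by simp
  then show ?case using mono by (smt (verit) mult_right_mono)
qed

end


context sample
begin

lemma Phi_le: "\<tau> \<in> T n \<Longrightarrow> Phi \<tau> \<le> Aa \<tau> + (Bp \<tau> + Bm \<tau>) / 3"
proof -
  assume t: "\<tau> \<in> T n"
  have "Phi \<tau> \<le> max (Aa \<tau>) ((Bp \<tau> + Bm \<tau>) / 3)"
    unfolding Phi_def
  proof (rule cSUP_least[OF C1_ne])
    fix f assume "f \<in> C1"
    then show "(\<Sum>i<n. \<tau> i * f (y i)) \<le> max (Aa \<tau>) ((Bp \<tau> + Bm \<tau>) / 3)"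
      using pointwise[OF t, of f 1] by (simp add: C1_def)
  qed
  then show ?thesis using Aa_nonneg[of \<tau>] Bp_nonneg[OF t] Bm_nonneg[OF t] unfolding add_divide_distrib by linarith
qed

lemma sum_Bp: "(\<Sum>\<tau>\<in>T n. Bp \<tau>) \<le> (\<Sum>\<tau>\<in>T n. Phi \<tau>)"
  using contraction[OF C1_ne, of "\<lambda>f i. f (y i)" 1 "\<lambda>_. 0" 0 relu n] C1_bnd relu_lip
  unfolding Bp_def Phi_def by simp

lemma sum_Bm: "(\<Sum>\<tau>\<in>T n. Bm \<tau>) \<le> (\<Sum>\<tau>\<in>T n. Phi \<tau>)"
proof -
  have lip: "\<bar>- relu a - - relu c\<bar> \<le> \<bar>a - c\<bar>" for a c using relu_lip[of a c] by linarith
  show ?thesis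
    using contraction[OF C1_ne, of "\<lambda>f i. f (y i)" 1 "\<lambda>_. 0" 0 "\<lambda>z. - relu z" n] C1_bnd lip
    unfolding Bm_def Phi_def by simp
qed

lemma sum_Aa: "(\<Sum>\<tau>\<in>T n. Aa \<tau>) \<le> 2 ^ n * sqrt (2 * real n * ln (2 * real CARD('d)))"
proof -
  define J where "J = (UNIV :: 'd set) \<times> {-1, 1::real}"
  define w where "w = (\<lambda>(j::'d, s::real) (i::nat). if i < n then s * y i $ j else 0)"
  have cJ: "card J = 2 * CARD('d)" unfolding J_def by (simp add: card_cartesian_product)
  have fJ: "finite J" unfolding J_def by simp
  have c2: "2 \<le> card J" unfolding cJ using finite_UNIV_card_ge_0[where 'a='d] by simp
  have wb: "\<bar>w js i\<bar> \<le> 1" if "js \<in> J" for js i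
    using that ybnd unfolding J_def w_def by (auto simp: abs_mult)
  have "Aa \<tau> = Max ((\<lambda>js. \<Sum>i<n. \<tau> i * w js i) ` J)" for \<tau>
    unfolding Aa_def J_def w_def by (simp add: case_prod_beta)
  then have "(\<Sum>\<tau>\<in>T n. Aa \<tau>) = (\<Sum>\<tau>\<in>T n. Max ((\<lambda>js. \<Sum>i<n. \<tau> i * w js i) ` J))" by simp
  also have "\<dots> \<le> 2 ^ n * sqrt (2 * real n * ln (real (card J)))"
    by (rule massart[OF fJ c2 wb])
  finally show ?thesis unfolding cJ by simp
qed

lemma rad_Phi: "(\<Sum>\<tau>\<in>T n. Phi \<tau>) \<le> 3 * (2 ^ n * sqrt (2 * real n * ln (2 * real CARD('d))))"
proof -
  have "(\<Sum>\<tau>\<in>T n. Phi \<tau>) \<le> (\<Sum>\<tau>\<in>T n. Aa \<tau> + (Bp \<tau> + Bm \<tau>) / 3)"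
    by (rule sum_mono[OF Phi_le])
  also have "\<dots> = (\<Sum>\<tau>\<in>T n. Aa \<tau>) + ((\<Sum>\<tau>\<in>T n. Bp \<tau>) + (\<Sum>\<tau>\<in>T n. Bm \<tau>)) / 3"
    by (simp only: sum.distrib flip: sum_divide_distrib)
  finally show ?thesis using sum_Bp sum_Bm sum_Aa unfolding add_divide_distrib by linarith
qed

end


lemma sample_I: "(\<And>i j. \<bar>y i $ j\<bar> \<le> 1) \<Longrightarrow> sample y"
  by (simp add: sample_def)

lemma path_norm_nonneg: "path_norm m D L th \<ge> 0"
  using cls_nonneg[OF resnet_cls] .

lemma resnet_zero: "resnet m D L 0 th = 0"
  using cls_zero_at[OF resnet_cls] .

definition zparam :: "('d::finite) resnet_param" where
  "zparam = \<lparr>out_w = \<lambda>_. 0, in_w = \<lambda>_ _. 0, W_w = \<lambda>_ _ _. 0, U_w = \<lambda>_ _ _. 0\<rparr>"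

lemma path_norm_zparam: "path_norm m D L zparam = 0"
  by (simp add: path_norm_def zparam_def)

lemma G_ne: "M \<ge> 0 \<Longrightarrow> G_class m D L A \<gamma> M \<noteq> {}"
proof -
  assume M: "M \<ge> 0"
  have P: "(\<Sum>a\<in>A. path_norm m D L ((\<lambda>_. zparam) a)) \<le> M" using M by (simp only: path_norm_zparam sum.neutral_const)
  have "(\<lambda>(s, a, s'). resnet m D L s ((\<lambda>_. zparam) a) - \<gamma> * Max ((\<lambda>a'. resnet m D L s' ((\<lambda>_. zparam) a')) ` A))
      \<in> G_class m D L A \<gamma> M"
    unfolding G_class_def
    by (rule CollectI, rule exI[where x="\<lambda>_. zparam"], rule conjI[OF refl P])
  then show ?thesis by (metis empty_iff)
qed

lemma emp_bound:
  fixes s s' :: "nat \<Rightarrow> real^'d::finite" and a :: "nat \<Rightarrow> 'a" and A :: "'a set"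
  assumes A: "finite A" "card A = 2 ^ \<alpha>" and aA: "\<And>i. i < n \<Longrightarrow> a i \<in> A"
    and sb: "\<And>i j. i < n \<Longrightarrow> \<bar>s i $ j\<bar> \<le> 1" and sb': "\<And>i j. i < n \<Longrightarrow> \<bar>s' i $ j\<bar> \<le> 1"
    and g: "0 \<le> \<gamma>" "\<gamma> \<le> 1" and M: "M > 0"
  shows "emp_rad (G_class m D L A \<gamma> M) n (\<lambda>i. (s i, a i, s' i))
     \<le> (1 / real n) * (3 * (real (card A) + 7 ^ \<alpha>) * M * sqrt (2 * real n * ln (2 * real CARD('d))))"
proof -
  define yb where "yb b i = (if i < n \<and> a i = b then s i else 0)" for b i
  define y' where "y' i = (if i < n then s' i else 0)" for i
  have syb: "sample (yb b)" for b by (rule sample_I) (auto simp: yb_def sb)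
  have sy': "sample y'" by (rule sample_I) (auto simp: y'_def sb')
  define Ph where "Ph b = sample.Phi n (yb b)" for b
  define Ph' where "Ph' = sample.Phi n y'"
  define \<Psi> where "\<Psi> \<tau> = (\<Sum>b\<in>A. M * Ph b \<tau>) + 7 ^ \<alpha> * M * Ph' \<tau>" for \<tau>
  define R where "R = sqrt (2 * real n * ln (2 * real CARD('d)))"
  have key: "(SUP g\<in>G_class m D L A \<gamma> M. \<Sum>i<n. \<tau> i * g (s i, a i, s' i)) \<le> \<Psi> \<tau>" if t: "\<tau> \<in> T n" for \<tau>
  proof (rule cSUP_least[OF G_ne])
    show "0 \<le> M" using M by simp
    fix g :: "(real^'d) \<times> 'a \<times> (real^'d) \<Rightarrow> real" assume "g \<in> G_class m D L A \<gamma> M"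
    then obtain \<Theta> where gdef: "g = (\<lambda>(s, a, s'). resnet m D L s (\<Theta> a) - \<gamma> * Max ((\<lambda>a'. resnet m D L s' (\<Theta> a')) ` A))"
      and SM: "(\<Sum>a\<in>A. path_norm m D L (\<Theta> a)) \<le> M"
      unfolding G_class_def by auto
    define S where "S = (\<Sum>a\<in>A. path_norm m D L (\<Theta> a))"
    have S0: "S \<ge> 0" unfolding S_def by (intro sum_nonneg path_norm_nonneg)
    define H where "H x = - \<gamma> * Max ((\<lambda>a'. resnet m D L x (\<Theta> a')) ` A)" for x
    have gi: "g (s i, a i, s' i) = resnet m D L (s i) (\<Theta> (a i)) + H (s' i)" for i
      by (simp add: gdef H_def)
    have part1: "(\<Sum>i<n. \<tau> i * resnet m D L (s i) (\<Theta> (a i))) \<le> (\<Sum>b\<in>A. M * Ph b \<tau>)"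
    proof -
      have e: "resnet m D L (s i) (\<Theta> (a i)) = (\<Sum>b\<in>A. resnet m D L (yb b i) (\<Theta> b))" if "i < n" for i
      proof -
        have "(\<Sum>b\<in>A. resnet m D L (yb b i) (\<Theta> b)) = (\<Sum>b\<in>A. if b = a i then resnet m D L (s i) (\<Theta> (a i)) else 0)"
          by (rule sum.cong) (auto simp: yb_def that resnet_zero)
        also have "\<dots> = resnet m D L (s i) (\<Theta> (a i))" using aA[OF that] A by simp
        finally show ?thesis by simp
      qed
      have "(\<Sum>i<n. \<tau> i * resnet m D L (s i) (\<Theta> (a i))) = (\<Sum>i<n. \<Sum>b\<in>A. \<tau> i * resnet m D L (yb b i) (\<Theta> b))"
        by (rule sum.cong) (simp_all add: e sum_distrib_left)
      also have "\<dots> = (\<Sum>b\<in>A. \<Sum>i<n. \<tau> i * resnet m D L (yb b i) (\<Theta> b))"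
        by (rule sum.swap)
      also have "\<dots> \<le> (\<Sum>b\<in>A. M * Ph b \<tau>)"
      proof (rule sum_mono)
        fix b assume bA: "b \<in> A"
        have "(\<Sum>i<n. \<tau> i * resnet m D L (yb b i) (\<Theta> b)) \<le> path_norm m D L (\<Theta> b) * Ph b \<tau>"
          unfolding Ph_def using sample.cls_le_Phi[OF syb resnet_cls t] .
        also have "\<dots> \<le> M * Ph b \<tau>"
        proof (rule mult_right_mono)
          have "path_norm m D L (\<Theta> b) \<le> S" unfolding S_def
            by (rule member_le_sum[OF bA]) (auto simp: path_norm_nonneg A)
          then show "path_norm m D L (\<Theta> b) \<le> M" using SM S_def by simp
          show "0 \<le> Ph b \<tau>" unfolding Ph_def by (rule sample.Phi_nonneg[OF syb t])
        qed
        finally show "(\<Sum>i<n. \<tau> i * resnet m D L (yb b i) (\<Theta> b)) \<le> M * Ph b \<tau>" .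
      qed
      finally show ?thesis .
    qed
    have part2: "(\<Sum>i<n. \<tau> i * H (s' i)) \<le> 7 ^ \<alpha> * M * Ph' \<tau>"
    proof -
      have cM: "cls (\<lambda>x. Max ((\<lambda>a'. resnet m D L x (\<Theta> a')) ` A)) (7 ^ \<alpha> * S)"
        unfolding S_def by (rule cls_Max[OF A resnet_cls])
      have cH: "cls H (\<gamma> * (7 ^ \<alpha> * S))"
        by (rule cls_eq[OF cls_scale[OF cM, of "-\<gamma>"]]) (use g in \<open>simp_all add: H_def\<close>)
      have "(\<Sum>i<n. \<tau> i * H (s' i)) = (\<Sum>i<n. \<tau> i * H (y' i))"
        by (rule sum.cong) (auto simp: y'_def)
      also have "\<dots> \<le> \<gamma> * (7 ^ \<alpha> * S) * Ph' \<tau>"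
        unfolding Ph'_def by (rule sample.cls_le_Phi[OF sy' cH t])
      also have "\<dots> \<le> 7 ^ \<alpha> * M * Ph' \<tau>"
      proof (rule mult_right_mono)
        have "\<gamma> * (7 ^ \<alpha> * S) \<le> 1 * (7 ^ \<alpha> * S)" using g S0 by (intro mult_right_mono) auto
        also have "\<dots> \<le> 7 ^ \<alpha> * M" using SM S_def by simp
        finally show "\<gamma> * (7 ^ \<alpha> * S) \<le> 7 ^ \<alpha> * M" .
        show "0 \<le> Ph' \<tau>" unfolding Ph'_def by (rule sample.Phi_nonneg[OF sy' t])
      qed
      finally show ?thesis .
    qed
    show "(\<Sum>i<n. \<tau> i * g (s i, a i, s' i)) \<le> \<Psi> \<tau>"
      unfolding gi \<Psi>_def using part1 part2 by (simp add: distrib_left sum.distrib)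
  qed
  have "(\<Sum>\<tau>\<in>T n. SUP g\<in>G_class m D L A \<gamma> M. \<Sum>i<n. \<tau> i * g (s i, a i, s' i)) \<le> (\<Sum>\<tau>\<in>T n. \<Psi> \<tau>)"
    by (rule sum_mono[OF key])
  also have "\<dots> = (\<Sum>b\<in>A. \<Sum>\<tau>\<in>T n. M * Ph b \<tau>) + (\<Sum>\<tau>\<in>T n. 7 ^ \<alpha> * M * Ph' \<tau>)"
    unfolding \<Psi>_def sum.distrib using sum.swap[where A="T n" and B=A and g="\<lambda>\<tau> b. M * Ph b \<tau>"] by (simp only:)
  also have "\<dots> = (\<Sum>b\<in>A. M * (\<Sum>\<tau>\<in>T n. Ph b \<tau>)) + 7 ^ \<alpha> * M * (\<Sum>\<tau>\<in>T n. Ph' \<tau>)"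
    by (simp only: sum_distrib_left)
  also have "\<dots> \<le> (\<Sum>b\<in>A. M * (3 * (2 ^ n * R))) + 7 ^ \<alpha> * M * (3 * (2 ^ n * R))"
  proof (rule add_mono)
    have "(\<Sum>\<tau>\<in>T n. Ph b \<tau>) \<le> 3 * (2 ^ n * R)" for b
      unfolding Ph_def R_def by (rule sample.rad_Phi[OF syb])
    then show "(\<Sum>b\<in>A. M * (\<Sum>\<tau>\<in>T n. Ph b \<tau>)) \<le> (\<Sum>b\<in>A. M * (3 * (2 ^ n * R)))"
      using M by (intro sum_mono mult_left_mono) auto
    have "(\<Sum>\<tau>\<in>T n. Ph' \<tau>) \<le> 3 * (2 ^ n * R)"
      unfolding Ph'_def R_def by (rule sample.rad_Phi[OF sy'])
    then show "7 ^ \<alpha> * M * (\<Sum>\<tau>\<in>T n. Ph' \<tau>) \<le> 7 ^ \<alpha> * M * (3 * (2 ^ n * R))"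
      using M by (intro mult_left_mono) auto
  qed
  also have "\<dots> = 2 ^ n * (3 * (real (card A) + 7 ^ \<alpha>) * M * R)"
  proof -
    have alg: "x * (y * (3 * (z * r))) + w * y * (3 * (z * r)) = z * (3 * (x + w) * y * r)" for x y z w r :: real
      by (simp add: algebra_simps)
    show ?thesis unfolding sum_constant by (rule alg)
  qed
  finally have main: "(\<Sum>\<tau>\<in>T n. SUP g\<in>G_class m D L A \<gamma> M. \<Sum>i<n. \<tau> i * g (s i, a i, s' i))
      \<le> 2 ^ n * (3 * (real (card A) + 7 ^ \<alpha>) * M * R)" .
  have "emp_rad (G_class m D L A \<gamma> M) n (\<lambda>i. (s i, a i, s' i))
     = (1 / real n) * ((\<Sum>\<tau>\<in>T n. SUP g\<in>G_class m D L A \<gamma> M. \<Sum>i<n. \<tau> i * g (s i, a i, s' i)) / 2 ^ n)"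
    unfolding emp_rad_def by simp
  also have "\<dots> \<le> (1 / real n) * (3 * (real (card A) + 7 ^ \<alpha>) * M * R)"
  proof (rule mult_left_mono)
    show "(\<Sum>\<tau>\<in>T n. SUP g\<in>G_class m D L A \<gamma> M. \<Sum>i<n. \<tau> i * g (s i, a i, s' i)) / 2 ^ n
        \<le> 3 * (real (card A) + 7 ^ \<alpha>) * M * R"
      using main by (subst pos_divide_le_eq) (auto simp: mult.commute)
  qed simp
  finally show ?thesis unfolding R_def .
qed


lemma final_arith:
  fixes K M Lg :: real and \<alpha> n :: nat
  assumes K: "K = 2 ^ \<alpha>" and M: "M > 0" and Lg: "Lg \<ge> 0"
  shows "(1 / real n) * (3 * (K + 7 ^ \<alpha>) * M * sqrt (2 * real n * Lg)) \<le> 6 * K ^ 3 * M * sqrt (2 * Lg / real n)"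
proof (cases "n = 0")
  case True then show ?thesis by simp
next
  case False
  have K1: "K \<ge> 1" using K by simp
  have "(7::real) ^ \<alpha> \<le> 8 ^ \<alpha>" by (rule power_mono) auto
  also have "(8::real) ^ \<alpha> = K ^ 3"
  proof -
    have "K ^ 3 = 2 ^ (\<alpha> * 3)" unfolding K by (simp only: power_mult)
    also have "\<dots> = (2 ^ 3) ^ \<alpha>" by (simp only: power_mult[symmetric] mult.commute)
    finally show ?thesis by simp
  qed
  finally have a: "7 ^ \<alpha> \<le> K ^ 3" .
  have b: "K \<le> K ^ 3" using K1 by (simp add: power3_eq_cube) (metis less_1_mult mult.right_neutral order_le_less mult_le_cancel_left1 one_le_power power2_eq_square power3_eq_cube)
  have c: "3 * (K + 7 ^ \<alpha>) * M \<le> 6 * K ^ 3 * M" using a b M by simp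
  have s: "(1 / real n) * sqrt (2 * real n * Lg) = sqrt (2 * Lg / real n)"
  proof -
    have "sqrt (2 * Lg / real n) = sqrt (2 * real n * Lg / (real n)^2)"
      using False by (simp add: power2_eq_square)
    also have "\<dots> = sqrt (2 * real n * Lg) / real n" by (simp add: real_sqrt_divide)
    finally show ?thesis by simp
  qed
  have "(1 / real n) * (3 * (K + 7 ^ \<alpha>) * M * sqrt (2 * real n * Lg)) = (3 * (K + 7 ^ \<alpha>) * M) * ((1 / real n) * sqrt (2 * real n * Lg))"
    by (simp only: ac_simps)
  also have "\<dots> = 3 * (K + 7 ^ \<alpha>) * M * sqrt (2 * Lg / real n)"
    by (simp only: s)
  also have "\<dots> \<le> 6 * K ^ 3 * M * sqrt (2 * Lg / real n)" by (rule mult_right_mono[OF c]) (use Lg in simp)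
  finally show ?thesis .
qed


theorem lemma4p6:
  fixes S :: "(real^'d::finite) set" and A :: "'a set"
    and gt :: "real^'d \<Rightarrow> 'a \<Rightarrow> real \<Rightarrow> real^'d"
    and \<gamma> dt M :: real and m D L n \<alpha> :: nat
  assumes "compact S" and "S \<subseteq> {x. \<forall>j. 0 \<le> x $ j \<and> x $ j \<le> 1}"
    and "emeasure lborel S > 0"
    and "finite A" and "card A = 2 ^ \<alpha>"
    and "0 < \<gamma>" and "\<gamma> < 1"
    and "\<forall>s\<in>S. \<forall>a\<in>A. gt s a dt \<in> S"
    and "0 < dt" and "dt < 1"
    and "0 < m" and "0 < D" and "0 < L" and "0 < M"
  shows "rad (G_class m D L A \<gamma> M) n S A gt dt
           \<le> ennreal (6 * real (card A) ^ 3 * M * sqrt (2 * ln (2 * real CARD('d)) / real n))"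
proof -
  define Bnd where "Bnd = 6 * real (card A) ^ 3 * M * sqrt (2 * ln (2 * real CARD('d)) / real n)"
  have Ane: "A \<noteq> {}" using assms(4,5) by auto
  have Sfin: "emeasure lborel S < \<infinity>"
    by (rule emeasure_bounded_finite[OF compact_imp_bounded[OF assms(1)]])
  have S0: "emeasure lborel S \<noteq> 0" using assms(3) by simp
  define M1 where "M1 = uniform_measure lborel S"
  define M2 where "M2 = uniform_count_measure A"
  have p1: "prob_space M1" unfolding M1_def
    by (rule prob_space_uniform_measure) (use S0 Sfin in auto)
  have p2: "prob_space M2" unfolding M2_def by (rule prob_space_uniform_count_measure[OF assms(4) Ane])
  have pd: "prob_space (pair_dist S A)" unfolding pair_dist_def M1_def[symmetric] M2_def[symmetric]
    by (rule prob_space_pair[OF p1 p2])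
  have AE1: "AE x in pair_dist S A. fst x \<in> S \<and> snd x \<in> A"
  proof -
    have "AE x in M1. x \<in> S" unfolding M1_def using S0 Sfin by (subst AE_uniform_measure) auto
    moreover have e: "distr (M1 \<Otimes>\<^sub>M M2) M1 fst = M1" by (rule prob_space.distr_pair_fst[OF p2])
    ultimately have "AE x in distr (M1 \<Otimes>\<^sub>M M2) M1 fst. x \<in> S" by (simp only: e)
    then have a: "AE x in M1 \<Otimes>\<^sub>M M2. fst x \<in> S" by (rule AE_distrD[rotated]) simp
    have b: "AE x in M1 \<Otimes>\<^sub>M M2. snd x \<in> A"
      using AE_space[of "M1 \<Otimes>\<^sub>M M2"] by eventually_elim (auto simp: space_pair_measure M2_def space_uniform_count_measure)
    from a b show ?thesis unfolding pair_dist_def M1_def M2_def by eventually_elim auto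
  qed
  define P where "P = PiM {..<n} (\<lambda>_. pair_dist S A)"
  have pP: "prob_space P" unfolding P_def by (rule prob_space_PiM) (rule pd)
  have AEi: "AE \<omega> in P. fst (\<omega> i) \<in> S \<and> snd (\<omega> i) \<in> A" if "i \<in> {..<n}" for i
    unfolding P_def by (rule AE_PiM_component[where P="\<lambda>x. fst x \<in> S \<and> snd x \<in> A"]) (use pd AE1 that in auto)
  have AEall: "AE \<omega> in P. \<forall>i\<in>{..<n}. fst (\<omega> i) \<in> S \<and> snd (\<omega> i) \<in> A"
    by (rule eventually_ball_finite) (use AEi in auto)
  have box: "\<bar>x $ j\<bar> \<le> 1" if "x \<in> S" for x j using assms(2) that by auto
  have bound: "emp_rad (G_class m D L A \<gamma> M) n (\<lambda>i. (fst (\<omega> i), snd (\<omega> i), gt (fst (\<omega> i)) (snd (\<omega> i)) dt)) \<le> Bnd"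
    if w: "\<forall>i\<in>{..<n}. fst (\<omega> i) \<in> S \<and> snd (\<omega> i) \<in> A" for \<omega>
  proof -
    have "emp_rad (G_class m D L A \<gamma> M) n (\<lambda>i. (fst (\<omega> i), snd (\<omega> i), gt (fst (\<omega> i)) (snd (\<omega> i)) dt))
       \<le> (1 / real n) * (3 * (real (card A) + 7 ^ \<alpha>) * M * sqrt (2 * real n * ln (2 * real CARD('d))))"
      by (rule emp_bound[where s="\<lambda>i. fst (\<omega> i)" and a="\<lambda>i. snd (\<omega> i)" and s'="\<lambda>i. gt (fst (\<omega> i)) (snd (\<omega> i)) dt", OF assms(4,5)])
         (use w assms(6,7,8,14) box in auto)
    also have "\<dots> \<le> Bnd" unfolding Bnd_def
    proof (rule final_arith)
      have "CARD('d) > 0" by (rule finite_UNIV_card_ge_0) simp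
      then have "1 \<le> CARD('d)" by linarith
      then have "(1::real) \<le> real CARD('d)" by simp
      then have "(1::real) \<le> 2 * real CARD('d)" by linarith
      then show "0 \<le> ln (2 * real CARD('d))" by (rule ln_ge_zero)
    qed (use assms(5,14) in auto)
    finally show ?thesis .
  qed
  have "rad (G_class m D L A \<gamma> M) n S A gt dt \<le> (\<integral>\<^sup>+\<omega>. ennreal Bnd \<partial>P)"
    unfolding rad_def P_def[symmetric]
    by (rule nn_integral_mono_AE) (use AEall in \<open>eventually_elim, auto intro: ennreal_leI bound\<close>)
  also have "\<dots> = ennreal Bnd" using prob_space.emeasure_space_1[OF pP] by simp
  finally show ?thesis unfolding Bnd_def .
qed


end
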